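(* Let $\mathscr{X}$ be the class of functions defined in the context, let $\widehat x\in\mathscr X$ be the function with all coefficients $\theta_{m,k}=+1$, and let $x^*$ be the function defined in the context. Then: (a) $\displaystyle\max_{x\in\mathscr{X}}\max_{t\in[0,1]}|x(t)|=\max_{t\in[0,1]}\widehat x(t)=\frac13(2+\sqrt2)$, and the maximum of $\widehat x(t)$ is attained at $t=\frac13$ and $t=\frac23$. (b) $\displaystyle\max_{x\in\mathscr{X}}\max_{s,t\in[0,1]}|x(t)-x(s)|=\frac16(5+4\sqrt2)$, where the respective maxima are attained at $s=1/3$, $t=5/6$, and $x=x^*$.
   Context: The Faber--Schauder functions are $e_{0,0}(t):=(\min\{t,1-t\})^+$ and $e_{m,k}(t):=2^{-m/2}e_{0,0}(2^m t-k)$ for $t\in\mathbb R$, $m\ge1$, $k\in\mathbb Z$. For coefficients $\theta_{m,k}\in\{-1,+1\}$, the partial sums $x^n(t)=\sum_{m=0}^{n-1}\sum_{k=0}^{2^m-1}\theta_{m,k}e_{m,k}(t)$, $t\in[0,1]$, converge uniformly to a continuous function. $\mathscr X$ denotes the set of all functions $x\in C[0,1]$ of the form $x=\sum_{m=0}^\infty\sum_{k=0}^{2^m-1}\theta_{m,k}e_{m,k}$ with $\theta_{m,k}\in\{-1,+1\}$. Define $\widehat x:=\sum_{m=0}^\infty\sum_{k=0}^{2^m-1}e_{m,k}$ and $x^*:=e_{0,0}+\sum_{m=1}^\infty\Big(\sum_{k=0}^{2^{m-1}-1}e_{m,k}-\sum_{\ell=2^{m-1}}^{2^m-1}e_{m,\ell}\Big)$.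 *)

theory Defs
  imports "HOL-Analysis.Analysis"
begin

definition e00 :: "real \<Rightarrow> real" where
  "e00 t = max (min t (1 - t)) 0"

definition schauder :: "nat \<Rightarrow> nat \<Rightarrow> real \<Rightarrow> real" where
  "schauder m k t = 2 powr (- real m / 2) * e00 (2 ^ m * t - real k)"

definition FS_fun :: "(nat \<Rightarrow> nat \<Rightarrow> real) \<Rightarrow> real \<Rightarrow> real" where
  "FS_fun \<theta> t = (\<Sum>m. \<Sum>k<2^m. \<theta> m k * schauder m k t)"

definition FS_class :: "(real \<Rightarrow> real) set" where
  "FS_class = {x. \<exists>\<theta>. (\<forall>m k. \<theta> m k \<in> {-1, 1}) \<and> x = FS_fun \<theta>}"

definition xhat :: "real \<Rightarrow> real" where
  "xhat t = (\<Sum>m. \<Sum>k<2^m. schauder m k t)"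

definition xstar :: "real \<Rightarrow> real" where
  "xstar t = schauder 0 0 t +
     (\<Sum>m. (\<Sum>k<2^m. schauder (Suc m) k t) - (\<Sum>l\<in>{2^m..<2^(Suc m)}. schauder (Suc m) l t))"

end

theory Submission
  imports Defs
begin

definition Lv :: "(nat \<Rightarrow> nat \<Rightarrow> real) \<Rightarrow> nat \<Rightarrow> real \<Rightarrow> real" where
  "Lv th m t = (\<Sum>k<2^m. th m k * schauder m k t)"
definition Ps :: "(nat \<Rightarrow> nat \<Rightarrow> real) \<Rightarrow> nat \<Rightarrow> real \<Rightarrow> real" where
  "Ps th n t = (\<Sum>m<n. Lv th m t)"
definition thL :: "(nat \<Rightarrow> nat \<Rightarrow> real) \<Rightarrow> nat \<Rightarrow> nat \<Rightarrow> real" where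
  "thL th = (\<lambda>m k. th (Suc m) k)"
definition thR :: "(nat \<Rightarrow> nat \<Rightarrow> real) \<Rightarrow> nat \<Rightarrow> nat \<Rightarrow> real" where
  "thR th = (\<lambda>m k. th (Suc m) (2^m + k))"
definition MM :: real where "MM = (2 + sqrt 2)/3"
definition Ub :: "real \<Rightarrow> real" where "Ub u = min MM ((1 + sqrt 2)/3 + e00 u)"
definition Uf :: "real \<Rightarrow> real" where "Uf u = (if 0 < u \<and> u < 1 then Ub u else 0)"
definition bnd :: "(nat \<Rightarrow> nat \<Rightarrow> real) \<Rightarrow> bool" where "bnd th \<longleftrightarrow> (\<forall>m k. \<bar>th m k\<bar> \<le> 1)"

lemma e00_nonneg: "0 \<le> e00 t" by (simp add: e00_def)
lemma e00_le: "e00 t \<le> 1/2" by (simp add: e00_def max_def min_def)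
lemma e00_left: "0 \<le> t \<Longrightarrow> t \<le> 1/2 \<Longrightarrow> e00 t = t" by (simp add: e00_def)
lemma e00_right: "1/2 \<le> t \<Longrightarrow> t \<le> 1 \<Longrightarrow> e00 t = 1 - t" by (simp add: e00_def)
lemma e00_out: "t \<le> 0 \<or> 1 \<le> t \<Longrightarrow> e00 t = 0" by (auto simp add: e00_def)
lemma e00_sym: "e00 (1 - t) = e00 t" by (simp add: e00_def min.commute)

lemma schauder_nonneg: "0 \<le> schauder m k t"
  by (simp add: schauder_def e00_nonneg)

lemma sqrt2_facts: "sqrt 2 * sqrt 2 = (2::real)" "sqrt (2::real) > 1.4" "sqrt (2::real) < 1.5"
proof -
  show "sqrt 2 * sqrt 2 = (2::real)" by simp
  show "sqrt (2::real) > 1.4" by (rule real_less_rsqrt) (simp add: power2_eq_square)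
  show "sqrt (2::real) < 1.5" by (rule real_less_lsqrt) (simp_all add: power2_eq_square)
qed

lemma powr_half_Suc: "(2::real) powr (- real (Suc m) / 2) = sqrt 2 / 2 * 2 powr (- real m / 2)"
proof -
  have x: "- real (Suc m) / 2 = -(1/2) + (- real m / 2)" by simp
  have "(2::real) powr (- real (Suc m) / 2) = 2 powr (-(1/2)) * 2 powr (- real m / 2)"
    unfolding x by (rule powr_add)
  also have "(2::real) powr (-(1/2)) = 1 / sqrt 2"
    by (simp add: powr_minus_divide powr_half_sqrt)
  also have "1 / sqrt 2 = sqrt 2 / (2::real)"
    by (simp add: real_div_sqrt)
  finally show ?thesis .
qed

lemma schauder_Suc: "schauder (Suc m) k t = sqrt 2 / 2 * schauder m k (2*t)"
proof -
  have e: "e00 ((2::real) ^ Suc m * t - real k) = e00 (2 ^ m * (2 * t) - real k)" by (simp add: mult_ac)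
  show ?thesis unfolding schauder_def powr_half_Suc e by (simp add: mult_ac)
qed

lemma schauder_Suc_shift: "schauder (Suc m) (2^m + k) t = sqrt 2 / 2 * schauder m k (2*t - 1)"
proof -
  have "(2::real) ^ Suc m * t - real (2^m + k) = 2 ^ m * (2 * t - 1) - real k"
    by (simp add: algebra_simps)
  then have e: "e00 ((2::real) ^ Suc m * t - real (2^m + k)) = e00 (2 ^ m * (2 * t - 1) - real k)" by (rule arg_cong)
  show ?thesis unfolding schauder_def powr_half_Suc e by (simp add: mult_ac)
qed

lemma sum_split_add: "sum f {..<a+b} = sum f {..<a} + (\<Sum>k<b. f (a + k))" for f :: "nat \<Rightarrow> real"
  by (induction b) simp_all

lemma Lv_Suc: "Lv th (Suc m) t = sqrt 2 / 2 * (Lv (thL th) m (2*t) + Lv (thR th) m (2*t - 1))"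
proof -
  have 1: "Lv th (Suc m) t = (\<Sum>k<2^m + 2^m. th (Suc m) k * schauder (Suc m) k t)"
    by (simp add: Lv_def mult_2)
  have 2: "(\<Sum>k<2^m + 2^m. th (Suc m) k * schauder (Suc m) k t) = (\<Sum>k<2^m. th (Suc m) k * schauder (Suc m) k t) +
      (\<Sum>k<2^m. th (Suc m) (2^m + k) * schauder (Suc m) (2^m + k) t)"
    by (rule sum_split_add)
  have 3: "(\<Sum>k<2^m. th (Suc m) k * schauder (Suc m) k t) = sqrt 2 / 2 * Lv (thL th) m (2*t)"
    unfolding Lv_def thL_def schauder_Suc sum_distrib_left by (simp add: mult.left_commute)
  have 4: "(\<Sum>k<2^m. th (Suc m) (2^m + k) * schauder (Suc m) (2^m + k) t) = sqrt 2 / 2 * Lv (thR th) m (2*t - 1)"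
    unfolding Lv_def thR_def schauder_Suc_shift sum_distrib_left by (simp add: mult.left_commute)
  show ?thesis using 1 2 3 4 by (simp add: distrib_left)
qed

lemma Lv_0: "Lv th 0 t = th 0 0 * e00 t"
  by (simp add: Lv_def schauder_def)

lemma Ps_Suc: "Ps th (Suc n) t = th 0 0 * e00 t + sqrt 2 / 2 * (Ps (thL th) n (2*t) + Ps (thR th) n (2*t - 1))"
proof -
  have "Ps th (Suc n) t = th 0 0 * e00 t + (\<Sum>m<n. sqrt 2 / 2 * (Lv (thL th) m (2*t) + Lv (thR th) m (2*t - 1)))"
    unfolding Ps_def sum.lessThan_Suc_shift Lv_Suc Lv_0 by simp
  also have "(\<Sum>m<n. sqrt 2 / 2 * (Lv (thL th) m (2*t) + Lv (thR th) m (2*t - 1))) = sqrt 2 / 2 * (Ps (thL th) n (2*t) + Ps (thR th) n (2*t - 1))"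
    unfolding Ps_def sum_distrib_left[symmetric] sum.distrib by simp
  finally show ?thesis .
qed

lemma Ub_le_MM: "Ub u \<le> MM" by (simp add: Ub_def)
lemma Ub_le2: "Ub u \<le> (1 + sqrt 2)/3 + e00 u" by (simp add: Ub_def)
lemma MM_pos: "0 \<le> MM" by (simp add: MM_def)
lemma Ub_nonneg: "0 \<le> Ub u" using e00_nonneg[of u] by (simp add: Ub_def MM_def)
lemma Ub_sym: "Ub (1 - u) = Ub u" by (simp add: Ub_def e00_sym)

lemma g_bound:
  assumes "0 \<le> a" "a \<le> 1/2"
  shows "a + sqrt 2 / 2 * Ub (2*a) \<le> MM"
proof -
  define s where "s = sqrt (2::real)"
  have ss: "s * s = 2" and s1: "1.4 < s" and s2: "s < 1.5" using sqrt2_facts by (auto simp: s_def)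
  define u where "u = Ub (2*a)"
  have uM: "u \<le> (2+s)/3" using Ub_le_MM by (simp add: u_def MM_def s_def)
  have ue: "u \<le> (1+s)/3 + e00 (2*a)" using Ub_le2 by (simp add: u_def s_def)
  have "a + s/2 * u \<le> (2+s)/3"
  proof (cases "a \<le> 1/6")
    case True
    have e: "e00 (2*a) = 2*a" using True assms by (intro e00_left) auto
    have "s/2 * u \<le> s/2 * ((1+s)/3 + 2*a)" using ue e s1 by (intro mult_left_mono) auto
    also have "\<dots> = (s + s * s)/6 + s*a" by (simp add: algebra_simps)
    also have "\<dots> = (s + 2)/6 + s*a" using ss by simp
    finally have A: "s/2 * u \<le> (s + 2)/6 + s*a" .
    have B: "s*a \<le> s/6" using mult_left_mono[of a "1/6" s] True s1 by simp
    show ?thesis using A B True unfolding add_divide_distrib diff_divide_distrib by linarith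
  next
    case F: False
    show ?thesis
    proof (cases "a \<le> 1/3")
      case True
      have "s/2 * u \<le> s/2 * ((2+s)/3)" using uM s1 by (intro mult_left_mono) auto
      also have "\<dots> = (2 * s + s * s)/6" by (simp add: algebra_simps)
      also have "\<dots> = (2 * s + 2)/6" using ss by simp
      finally show ?thesis using True unfolding add_divide_distrib diff_divide_distrib by linarith
    next
      case False
      have e: "e00 (2*a) = 1 - 2*a" using False assms by (intro e00_right) auto
      have "s/2 * u \<le> s/2 * ((1+s)/3 + (1 - 2*a))" using ue e s1 by (intro mult_left_mono) auto
      also have "\<dots> = (s + s * s)/6 + s/2 - s*a" by (simp add: algebra_simps)
      also have "\<dots> = (s + 2)/6 + s/2 - s*a" using ss by simp
      finally have A: "s/2 * u \<le> (s + 2)/6 + s/2 - s*a" .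
      have B: "s/3 \<le> s*a" using mult_left_mono[of "1/3" a s] False s1 by simp
      have C: "(s - 1) * (a - 1/3) \<ge> 0" using False s1 by (intro mult_nonneg_nonneg) auto
      have C': "(s - 1) * (a - 1/3) = s*a - s/3 - a + 1/3" by (simp add: field_simps)
      show ?thesis using A B C C' unfolding add_divide_distrib diff_divide_distrib by linarith
    qed
  qed
  then show ?thesis by (simp add: s_def u_def MM_def)
qed

lemma h_bound:
  assumes "0 \<le> b" "b \<le> 1/2"
  shows "sqrt 2 / 2 * Ub (2*b) - b \<le> (2 * sqrt 2 + 1)/6"
proof -
  define s where "s = sqrt (2::real)"
  have ss: "s * s = 2" and s1: "1.4 < s" and s2: "s < 1.5" using sqrt2_facts by (auto simp: s_def)
  define u where "u = Ub (2*b)"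
  have uM: "u \<le> (2+s)/3" using Ub_le_MM by (simp add: u_def MM_def s_def)
  have ue: "u \<le> (1+s)/3 + e00 (2*b)" using Ub_le2 by (simp add: u_def s_def)
  have "s/2 * u - b \<le> (2 * s + 1) / 6"
  proof (cases "b \<le> 1/6")
    case True
    have e: "e00 (2*b) = 2*b" using True assms by (intro e00_left) auto
    have "s/2 * u \<le> s/2 * ((1+s)/3 + 2*b)" using ue e s1 by (intro mult_left_mono) auto
    also have "\<dots> = (s + s * s)/6 + s*b" by (simp add: algebra_simps)
    also have "\<dots> = (s + 2)/6 + s*b" using ss by simp
    finally have A: "s/2 * u \<le> (s + 2)/6 + s*b" .
    have C: "(s - 1) * (1/6 - b) \<ge> 0" using True s1 by (intro mult_nonneg_nonneg) auto
    have C': "(s - 1) * (1/6 - b) = s/6 - s*b - 1/6 + b" by (simp add: field_simps)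
    show ?thesis using A C C' unfolding add_divide_distrib diff_divide_distrib by linarith
  next
    case False
    have "s/2 * u \<le> s/2 * ((2+s)/3)" using uM s1 by (intro mult_left_mono) auto
    also have "\<dots> = (2 * s + s * s)/6" by (simp add: algebra_simps)
    also have "\<dots> = (2 * s + 2)/6" using ss by simp
    finally show ?thesis using False unfolding add_divide_distrib diff_divide_distrib by linarith
  qed
  then show ?thesis by (simp add: s_def u_def)
qed

lemma rMM: "sqrt 2 / 2 * MM = (1 + sqrt 2)/3"
proof -
  have "sqrt 2 / 2 * MM = (2 * sqrt 2 + sqrt 2 * sqrt 2)/6" by (simp add: MM_def field_simps)
  also have "\<dots> = (1 + sqrt 2)/3" by simp
  finally show ?thesis .
qed

lemma Uf_nonneg: "0 \<le> Uf u" using Ub_nonneg by (simp add: Uf_def)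
lemma Uf_le_Ub: "Uf u \<le> Ub u" using Ub_nonneg by (simp add: Uf_def)
lemma Uf_le_MM: "Uf u \<le> MM" using Uf_le_Ub Ub_le_MM order_trans by blast
lemma Uf_out: "u \<le> 0 \<or> 1 \<le> u \<Longrightarrow> Uf u = 0" by (auto simp: Uf_def)

lemma half_rec:
  assumes "0 \<le> t" "t \<le> 1/2"
  shows "t + sqrt 2 / 2 * Ub (2*t) \<le> Ub t"
proof -
  have a: "t + sqrt 2 / 2 * Ub (2*t) \<le> MM" using g_bound assms by blast
  have "sqrt 2 / 2 * Ub (2*t) \<le> sqrt 2 / 2 * MM" using Ub_le_MM by (intro mult_left_mono) auto
  then have c: "sqrt 2 / 2 * Ub (2*t) \<le> (1 + sqrt 2)/3" using rMM by linarith
  have b: "t + sqrt 2 / 2 * Ub (2*t) \<le> (1 + sqrt 2)/3 + e00 t"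
    using c e00_left[OF assms] by linarith
  show ?thesis using a b by (simp add: Ub_def)
qed

lemma Uf_rec: "e00 t + sqrt 2 / 2 * (Uf (2*t) + Uf (2*t - 1)) \<le> Uf t"
proof -
  have r0: "0 \<le> sqrt (2::real) / 2" by simp
  consider "t \<le> 0 \<or> 1 \<le> t" | "0 < t \<and> t \<le> 1/2" | "1/2 < t \<and> t < 1" by linarith
  then show ?thesis
  proof cases
    case 1
    then show ?thesis by (auto simp: e00_out Uf_out)
  next
    case 2
    have z: "Uf (2*t - 1) = 0" using 2 by (intro Uf_out) auto
    have "sqrt 2 / 2 * Uf (2*t) \<le> sqrt 2 / 2 * Ub (2*t)" using Uf_le_Ub r0 by (intro mult_left_mono) auto
    moreover have "t + sqrt 2 / 2 * Ub (2*t) \<le> Ub t" using 2 by (intro half_rec) auto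
    moreover have "Uf t = Ub t" using 2 by (simp add: Uf_def)
    moreover have "e00 t = t" using 2 by (intro e00_left) auto
    moreover have "sqrt 2 / 2 * (Uf (2*t) + Uf (2*t - 1)) = sqrt 2 / 2 * Uf (2*t)" using z by simp
    ultimately show ?thesis by linarith
  next
    case 3
    define t' where "t' = 1 - t"
    have z: "Uf (2*t) = 0" using 3 by (intro Uf_out) auto
    have "sqrt 2 / 2 * Uf (2*t - 1) \<le> sqrt 2 / 2 * Ub (2*t - 1)" using Uf_le_Ub r0 by (intro mult_left_mono) auto
    moreover have "sqrt 2 / 2 * Ub (2*t - 1) = sqrt 2 / 2 * Ub (2*t')" using Ub_sym[of "2*t'"] by (simp add: t'_def algebra_simps)
    moreover have "t' + sqrt 2 / 2 * Ub (2*t') \<le> Ub t'" using 3 by (intro half_rec) (auto simp: t'_def)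
    moreover have "Uf t = Ub t'" using 3 Ub_sym[of t] by (simp add: Uf_def t'_def)
    moreover have "e00 t = t'" using 3 e00_sym[of t] e00_left[of t'] by (simp add: t'_def)
    moreover have "sqrt 2 / 2 * (Uf (2*t) + Uf (2*t - 1)) = sqrt 2 / 2 * Uf (2*t - 1)" using z by simp
    ultimately show ?thesis by linarith
  qed
qed

lemma bnd_L: "bnd th \<Longrightarrow> bnd (thL th)" by (simp add: bnd_def thL_def)
lemma bnd_R: "bnd th \<Longrightarrow> bnd (thR th)" by (simp add: bnd_def thR_def)

lemma abs_comb:
  fixes x y z1 z2 r :: real
  assumes "\<bar>x\<bar> \<le> 1" "0 \<le> r"
  shows "\<bar>x*y + r*(z1+z2)\<bar> \<le> \<bar>y\<bar> + r*(\<bar>z1\<bar> + \<bar>z2\<bar>)"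
proof -
  have "\<bar>x*y\<bar> \<le> \<bar>y\<bar>" using assms mult_right_mono[of "\<bar>x\<bar>" 1 "\<bar>y\<bar>"] by (simp add: abs_mult)
  moreover have "\<bar>r*(z1+z2)\<bar> \<le> r*(\<bar>z1\<bar> + \<bar>z2\<bar>)"
    using assms mult_left_mono[OF abs_triangle_ineq[of z1 z2], of r] by (simp add: abs_mult)
  ultimately show ?thesis by (smt (verit) abs_triangle_ineq)
qed

lemma Ps_bound: "bnd th \<Longrightarrow> \<bar>Ps th n t\<bar> \<le> Uf t"
proof (induction n arbitrary: th t)
  case 0
  then show ?case by (simp add: Ps_def Uf_nonneg)
next
  case (Suc n)
  have r0: "0 \<le> sqrt (2::real) / 2" by simp
  have h1: "\<bar>th 0 0\<bar> \<le> 1" using Suc.prems by (simp add: bnd_def)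
  have "\<bar>Ps th (Suc n) t\<bar> \<le> \<bar>e00 t\<bar> + sqrt 2 / 2 * (\<bar>Ps (thL th) n (2*t)\<bar> + \<bar>Ps (thR th) n (2*t - 1)\<bar>)"
    unfolding Ps_Suc by (rule abs_comb[OF h1 r0])
  also have "\<dots> \<le> e00 t + sqrt 2 / 2 * (Uf (2*t) + Uf (2*t - 1))"
    using Suc.IH[OF bnd_L[OF Suc.prems]] Suc.IH[OF bnd_R[OF Suc.prems]] e00_nonneg r0
    by (intro add_mono mult_left_mono) auto
  also have "\<dots> \<le> Uf t" by (rule Uf_rec)
  finally show ?case .
qed

definition one :: "nat \<Rightarrow> nat \<Rightarrow> real" where "one = (\<lambda>m k. 1)"

lemma one_app[simp]: "one m k = 1" by (simp add: one_def)

lemma bnd_one: "bnd one" by (simp add: bnd_def one_def)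

lemma Lv_one_nonneg: "0 \<le> Lv one m t"
  by (simp add: Lv_def one_def schauder_nonneg sum_nonneg)

lemma Lv_abs_le: "bnd th \<Longrightarrow> \<bar>Lv th m t\<bar> \<le> Lv one m t"
proof -
  assume b: "bnd th"
  have "\<bar>Lv th m t\<bar> \<le> (\<Sum>k<2^m. \<bar>th m k * schauder m k t\<bar>)" unfolding Lv_def by (rule sum_abs)
  also have "\<dots> \<le> (\<Sum>k<2^m. one m k * schauder m k t)"
  proof (rule sum_mono)
    fix k
    have "\<bar>th m k\<bar> * schauder m k t \<le> 1 * schauder m k t"
      using b schauder_nonneg by (intro mult_right_mono) (auto simp: bnd_def)
    then show "\<bar>th m k * schauder m k t\<bar> \<le> one m k * schauder m k t"
      using schauder_nonneg by (simp add: abs_mult one_def)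
  qed
  finally show ?thesis by (simp add: Lv_def)
qed

lemma summable_one: "summable (\<lambda>m. Lv one m t)"
proof (rule summableI_nonneg_bounded)
  show "\<And>n. 0 \<le> Lv one n t" by (rule Lv_one_nonneg)
  fix n
  have "(\<Sum>m<n. Lv one m t) = Ps one n t" by (simp add: Ps_def)
  also have "\<dots> \<le> \<bar>Ps one n t\<bar>" by simp
  also have "\<dots> \<le> MM" using Ps_bound[OF bnd_one] Uf_le_MM order_trans by blast
  finally show "(\<Sum>m<n. Lv one m t) \<le> MM" .
qed

lemma summable_Lv: "bnd th \<Longrightarrow> summable (\<lambda>m. Lv th m t)"
  by (rule summable_comparison_test'[OF summable_one]) (auto dest: Lv_abs_le)

lemma FS_Lv: "FS_fun th t = (\<Sum>m. Lv th m t)"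
  by (simp add: FS_fun_def Lv_def)

lemma Ps_lim: "bnd th \<Longrightarrow> (\<lambda>n. Ps th n t) \<longlonglongrightarrow> FS_fun th t"
  unfolding FS_Lv Ps_def by (rule summable_LIMSEQ[OF summable_Lv])

lemma FS_bound: "bnd th \<Longrightarrow> \<bar>FS_fun th t\<bar> \<le> Uf t"
  by (rule LIMSEQ_le_const2[OF tendsto_rabs[OF Ps_lim]]) (auto intro: Ps_bound)

lemma FS_out: "bnd th \<Longrightarrow> t \<le> 0 \<or> 1 \<le> t \<Longrightarrow> FS_fun th t = 0"
  using FS_bound[of th t] Uf_out[of t] by simp

lemma FS_rec: "bnd th \<Longrightarrow> FS_fun th t = th 0 0 * e00 t + sqrt 2 / 2 * (FS_fun (thL th) (2*t) + FS_fun (thR th) (2*t - 1))"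
proof -
  assume b: "bnd th"
  have 1: "(\<lambda>n. Ps th (Suc n) t) \<longlonglongrightarrow> FS_fun th t" by (rule LIMSEQ_Suc[OF Ps_lim[OF b]])
  have 2: "(\<lambda>n. Ps th (Suc n) t) \<longlonglongrightarrow> th 0 0 * e00 t + sqrt 2 / 2 * (FS_fun (thL th) (2*t) + FS_fun (thR th) (2*t - 1))"
    unfolding Ps_Suc
    by (intro tendsto_intros Ps_lim bnd_L bnd_R b)
  show ?thesis using LIMSEQ_unique[OF 1 2] .
qed

definition NN :: real where "NN = (5 + 4 * sqrt 2)/6"

lemma K_bound:
  assumes "0 \<le> a" "a \<le> 1/2" "0 \<le> b" "b \<le> 1/2"
  shows "\<bar>a - b\<bar> + sqrt 2 / 2 * (Ub (2*a) + Ub (2*b)) \<le> NN"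
proof -
  have d: "sqrt 2 / 2 * (Ub (2*a) + Ub (2*b)) = sqrt 2 / 2 * Ub (2*a) + sqrt 2 / 2 * Ub (2*b)"
    by (simp add: distrib_left)
  have ga: "a + sqrt 2 / 2 * Ub (2*a) \<le> MM" using g_bound assms by blast
  have gb: "b + sqrt 2 / 2 * Ub (2*b) \<le> MM" using g_bound assms by blast
  have ha: "sqrt 2 / 2 * Ub (2*a) - a \<le> (2 * sqrt 2 + 1) / 6" using h_bound assms by blast
  have hb: "sqrt 2 / 2 * Ub (2*b) - b \<le> (2 * sqrt 2 + 1) / 6" using h_bound assms by blast
  have n: "NN = MM + (2 * sqrt 2 + 1) / 6" by (simp add: NN_def MM_def field_simps)
  show ?thesis
  proof (cases "b \<le> a")
    case True
    then have "\<bar>a - b\<bar> = a - b" by simp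
    then show ?thesis using d ga hb n by linarith
  next
    case False
    then have "\<bar>a - b\<bar> = b - a" by simp
    then show ?thesis using d gb ha n by linarith
  qed
qed

lemma rNN: "1/2 + sqrt 2 / 2 * NN \<le> NN"
proof -
  have "sqrt 2 / 2 * NN = (5 * sqrt 2 + 4 * (sqrt 2 * sqrt 2))/12" by (simp add: NN_def field_simps)
  also have "\<dots> = (5 * sqrt 2 + 8)/12" by simp
  finally have "sqrt 2 / 2 * NN = (5 * sqrt 2 + 8)/12" .
  then show ?thesis using sqrt2_facts(2) unfolding NN_def add_divide_distrib by linarith
qed

lemma e00_diff: "\<bar>e00 t - e00 u\<bar> \<le> 1/2"
  using e00_nonneg[of t] e00_nonneg[of u] e00_le[of t] e00_le[of u] by linarith

lemma Ps_zeroR: "bnd th \<Longrightarrow> u \<le> 0 \<Longrightarrow> Ps th n u = 0"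
  using Ps_bound[of th n u] Uf_out[of u] by simp
lemma Ps_zeroL: "bnd th \<Longrightarrow> 1 \<le> u \<Longrightarrow> Ps th n u = 0"
  using Ps_bound[of th n u] Uf_out[of u] by simp
lemma Ps_Ub: "bnd th \<Longrightarrow> \<bar>Ps th n u\<bar> \<le> Ub u"
  using Ps_bound[of th n u] Uf_le_Ub[of u] by linarith

lemma Ps_diff:
  "bnd th \<Longrightarrow> 0 \<le> t1 \<Longrightarrow> t1 \<le> 1 \<Longrightarrow> 0 \<le> t2 \<Longrightarrow> t2 \<le> 1 \<Longrightarrow> \<bar>Ps th n t1 - Ps th n t2\<bar> \<le> NN"
proof (induction n arbitrary: th t1 t2)
  case 0
  then show ?case by (simp add: Ps_def NN_def)
next
  case (Suc n)
  define r where "r = sqrt (2::real) / 2"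
  have r0: "0 \<le> r" by (simp add: r_def)
  define A where "A = Ps (thL th) n"
  define B where "B = Ps (thR th) n"
  have bA: "bnd (thL th)" and bB: "bnd (thR th)" using Suc.prems bnd_L bnd_R by auto
  have h1: "\<bar>th 0 0\<bar> \<le> 1" using Suc.prems by (simp add: bnd_def)
  have eq: "Ps th (Suc n) t1 - Ps th (Suc n) t2 = th 0 0 * (e00 t1 - e00 t2) + r * ((A (2*t1) - A (2*t2)) + (B (2*t1 - 1) - B (2*t2 - 1)))"
    by (simp add: Ps_Suc A_def B_def r_def algebra_simps)
  have main: "\<bar>Ps th (Suc n) t1 - Ps th (Suc n) t2\<bar> \<le> \<bar>e00 t1 - e00 t2\<bar> + r * (\<bar>A (2*t1) - A (2*t2)\<bar> + \<bar>B (2*t1 - 1) - B (2*t2 - 1)\<bar>)"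
    unfolding eq by (rule abs_comb[OF h1 r0])
  have ed: "\<bar>e00 t1 - e00 t2\<bar> \<le> 1/2" by (rule e00_diff)
  have rN: "1/2 + r * NN \<le> NN" using rNN by (simp add: r_def)
  consider "t1 \<le> 1/2 \<and> t2 \<le> 1/2" | "1/2 \<le> t1 \<and> 1/2 \<le> t2" | "t1 \<le> 1/2 \<and> 1/2 \<le> t2" | "t2 \<le> 1/2 \<and> 1/2 \<le> t1"
    by linarith
  then show ?case
  proof cases
    case 1
    have z: "B (2*t1 - 1) = 0" "B (2*t2 - 1) = 0" using 1 bB by (auto simp: B_def intro: Ps_zeroR)
    have ih: "\<bar>A (2*t1) - A (2*t2)\<bar> \<le> NN" unfolding A_def using 1 Suc.prems by (intro Suc.IH bA) auto
    have "r * (\<bar>A (2*t1) - A (2*t2)\<bar> + \<bar>B (2*t1 - 1) - B (2*t2 - 1)\<bar>) \<le> r * NN"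
      using z ih r0 by (simp add: mult_left_mono)
    then show ?thesis using main ed rN by linarith
  next
    case 2
    have z: "A (2*t1) = 0" "A (2*t2) = 0" using 2 bA by (auto simp: A_def intro: Ps_zeroL)
    have ih: "\<bar>B (2*t1 - 1) - B (2*t2 - 1)\<bar> \<le> NN" unfolding B_def using 2 Suc.prems by (intro Suc.IH bB) auto
    have "r * (\<bar>A (2*t1) - A (2*t2)\<bar> + \<bar>B (2*t1 - 1) - B (2*t2 - 1)\<bar>) \<le> r * NN"
      using z ih r0 by (simp add: mult_left_mono)
    then show ?thesis using main ed rN by linarith
  next
    case 3
    have z: "A (2*t2) = 0" "B (2*t1 - 1) = 0" using 3 bA bB by (auto simp: A_def B_def intro: Ps_zeroL Ps_zeroR)
    have u1: "\<bar>A (2*t1)\<bar> \<le> Ub (2*t1)" unfolding A_def by (rule Ps_Ub[OF bA])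
    have u2: "\<bar>B (2*t2 - 1)\<bar> \<le> Ub (2*(1 - t2))"
      using Ps_Ub[OF bB, of n "2*t2 - 1"] Ub_sym[of "2*(1-t2)"] by (simp add: B_def algebra_simps)
    have "r * (\<bar>A (2*t1) - A (2*t2)\<bar> + \<bar>B (2*t1 - 1) - B (2*t2 - 1)\<bar>) \<le> r * (Ub (2*t1) + Ub (2*(1 - t2)))"
      using z u1 u2 r0 by (intro mult_left_mono) auto
    moreover have "e00 t1 = t1" "e00 t2 = 1 - t2" using 3 Suc.prems by (auto intro: e00_left e00_right)
    moreover have "\<bar>t1 - (1 - t2)\<bar> + r * (Ub (2*t1) + Ub (2*(1 - t2))) \<le> NN"
      unfolding r_def using 3 Suc.prems by (intro K_bound) auto
    ultimately show ?thesis using main by simp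
  next
    case 4
    have z: "A (2*t1) = 0" "B (2*t2 - 1) = 0" using 4 bA bB by (auto simp: A_def B_def intro: Ps_zeroL Ps_zeroR)
    have u1: "\<bar>A (2*t2)\<bar> \<le> Ub (2*t2)" unfolding A_def by (rule Ps_Ub[OF bA])
    have u2: "\<bar>B (2*t1 - 1)\<bar> \<le> Ub (2*(1 - t1))"
      using Ps_Ub[OF bB, of n "2*t1 - 1"] Ub_sym[of "2*(1-t1)"] by (simp add: B_def algebra_simps)
    have "r * (\<bar>A (2*t1) - A (2*t2)\<bar> + \<bar>B (2*t1 - 1) - B (2*t2 - 1)\<bar>) \<le> r * (Ub (2*t2) + Ub (2*(1 - t1)))"
      using z u1 u2 r0 by (intro mult_left_mono) auto
    moreover have "e00 t2 = t2" "e00 t1 = 1 - t1" using 4 Suc.prems by (auto intro: e00_left e00_right)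
    moreover have "\<bar>t2 - (1 - t1)\<bar> + r * (Ub (2*t2) + Ub (2*(1 - t1))) \<le> NN"
      unfolding r_def using 4 Suc.prems by (intro K_bound) auto
    moreover have "\<bar>(1 - t1) - t2\<bar> = \<bar>t2 - (1 - t1)\<bar>" by simp
    ultimately show ?thesis using main by simp
  qed
qed

lemma FS_diff:
  assumes "bnd th" "0 \<le> t1" "t1 \<le> 1" "0 \<le> t2" "t2 \<le> 1"
  shows "\<bar>FS_fun th t1 - FS_fun th t2\<bar> \<le> NN"
  by (rule LIMSEQ_le_const2[OF tendsto_rabs[OF tendsto_diff[OF Ps_lim[OF assms(1)] Ps_lim[OF assms(1)]]]])
     (use Ps_diff assms in auto)

lemma FS_one: "FS_fun one = xhat"
  by (rule ext) (simp add: FS_fun_def xhat_def one_def)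

lemma thLR_one: "thL one = one" "thR one = one"
  by (simp_all add: thL_def thR_def one_def)

lemma xhat_vals: "xhat (1/3) = MM" "xhat (2/3) = MM"
proof -
  define X where "X = xhat (1/3)"
  define Y where "Y = xhat (2/3)"
  have e1: "e00 (1/3) = 1/3" by (simp add: e00_def)
  have e2: "e00 (2/3) = 1/3" by (simp add: e00_def)
  have z1: "xhat (-1/3) = 0" using FS_out[OF bnd_one, of "-1/3"] by (simp add: FS_one)
  have z2: "xhat (4/3) = 0" using FS_out[OF bnd_one, of "4/3"] by (simp add: FS_one)
  have hX: "X = 1/3 + sqrt 2 / 2 * Y"
    using FS_rec[OF bnd_one, of "1/3"] e1 z1 by (simp add: FS_one thLR_one X_def Y_def)
  have hY: "Y = 1/3 + sqrt 2 / 2 * X"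
    using FS_rec[OF bnd_one, of "2/3"] e2 z2 by (simp add: FS_one thLR_one X_def Y_def)
  have "X = 1/3 + sqrt 2 / 6 + (sqrt 2 * sqrt 2) / 4 * X"
    using hX hY by (simp add: algebra_simps)
  then have "X = 1/3 + sqrt 2 / 6 + X / 2" by simp
  then have X: "X = MM" by (simp add: MM_def field_simps)
  then have "Y = 1/3 + (1 + sqrt 2)/3" using hY unfolding rMM[symmetric] by simp
  then have "Y = MM" by (simp add: MM_def field_simps)
  with X show "xhat (1/3) = MM" "xhat (2/3) = MM" by (simp_all add: X_def Y_def)
qed

definition ths :: "nat \<Rightarrow> nat \<Rightarrow> real" where
  "ths m k = (if m = 0 then 1 else if k < 2^(m-1) then 1 else -1)"

lemma ths_pm: "ths m k \<in> {-1, 1}" by (simp add: ths_def)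
lemma bnd_pm: "(\<forall>m k. th m k \<in> {-1, 1}) \<Longrightarrow> bnd th"
  unfolding bnd_def by (metis abs_minus_cancel abs_one empty_iff insert_iff order_refl)
lemma bnd_ths: "bnd ths" using bnd_pm ths_pm by blast

lemma FS_cong: "(\<And>m k. k < 2^m \<Longrightarrow> th m k = th' m k) \<Longrightarrow> FS_fun th t = FS_fun th' t"
proof -
  assume h: "\<And>m k. k < 2^m \<Longrightarrow> th m k = th' m k"
  have "\<And>m. (\<Sum>k<2^m. th m k * schauder m k t) = (\<Sum>k<2^m. th' m k * schauder m k t)"
    by (rule sum.cong) (auto simp: h)
  then show ?thesis by (simp add: FS_fun_def)
qed

lemma FS_neg_one: "FS_fun (\<lambda>m k. -1) t = - xhat t"
proof -
  have "\<And>m. Lv (\<lambda>m k. -1) m t = - Lv one m t" by (simp add: Lv_def one_def sum_negf)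
  then have "FS_fun (\<lambda>m k. -1) t = (\<Sum>m. - Lv one m t)" by (simp add: FS_Lv)
  also have "\<dots> = - (\<Sum>m. Lv one m t)" by (rule suminf_minus[OF summable_one])
  also have "\<dots> = - xhat t" by (simp add: FS_Lv[symmetric] FS_one)
  finally show ?thesis .
qed

lemma Lv_ths_Suc: "Lv ths (Suc m) t = (\<Sum>k<2^m. schauder (Suc m) k t) - (\<Sum>l\<in>{2^m..<2^(Suc m)}. schauder (Suc m) l t)"
proof -
  have 1: "Lv ths (Suc m) t = (\<Sum>k<2^m + 2^m. ths (Suc m) k * schauder (Suc m) k t)"
    by (simp add: Lv_def mult_2)
  have 2: "(\<Sum>k<2^m + 2^m. ths (Suc m) k * schauder (Suc m) k t) = (\<Sum>k<2^m. ths (Suc m) k * schauder (Suc m) k t) +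
      (\<Sum>k<2^m. ths (Suc m) (2^m + k) * schauder (Suc m) (2^m + k) t)"
    by (rule sum_split_add)
  have 3: "(\<Sum>k<2^m. ths (Suc m) k * schauder (Suc m) k t) = (\<Sum>k<2^m. schauder (Suc m) k t)"
    by (rule sum.cong) (auto simp: ths_def)
  have 4: "(\<Sum>k<2^m. ths (Suc m) (2^m + k) * schauder (Suc m) (2^m + k) t) = - (\<Sum>k<2^m. schauder (Suc m) (2^m + k) t)"
    by (simp add: ths_def sum_negf)
  have 5: "(\<Sum>l\<in>{2^m..<2^(Suc m)}. schauder (Suc m) l t) = (\<Sum>k<2^m. schauder (Suc m) (2^m + k) t)"
  proof -
    have "{2^m..<2^(Suc m)} = {0 + 2^m..<2^m + (2^m::nat)}" by (simp add: mult_2)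
    then have "(\<Sum>l\<in>{2^m..<2^(Suc m)}. schauder (Suc m) l t) = (\<Sum>i\<in>{0..<2^m}. schauder (Suc m) (i + 2^m) t)"
      by (simp only: sum.shift_bounds_nat_ivl)
    then show ?thesis by (simp add: atLeast0LessThan add.commute)
  qed
  show ?thesis using 1 2 3 4 5 by simp
qed

lemma xstar_FS: "xstar = FS_fun ths"
proof (rule ext)
  fix t
  have "FS_fun ths t = (\<Sum>m. Lv ths m t)" by (rule FS_Lv)
  also have "\<dots> = Lv ths 0 t + (\<Sum>m. Lv ths (Suc m) t)"
    using suminf_split_head[OF summable_Lv[OF bnd_ths, of t]] by simp
  also have "Lv ths 0 t = schauder 0 0 t" by (simp add: Lv_def ths_def)
  finally show "xstar t = FS_fun ths t" by (simp add: xstar_def Lv_ths_Suc)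
qed

lemma xstar_rec: "xstar t = e00 t + sqrt 2 / 2 * (xhat (2*t) - xhat (2*t - 1))"
proof -
  have L: "FS_fun (thL ths) u = xhat u" for u
    using FS_cong[of "thL ths" one u] by (simp add: thL_def ths_def FS_one)
  have R: "thR ths = (\<lambda>m k. -1)" by (rule ext)+ (simp add: thR_def ths_def)
  show ?thesis using FS_rec[OF bnd_ths, of t] by (simp add: xstar_FS L R FS_neg_one ths_def)
qed

lemma xstar_diff: "\<bar>xstar (5/6) - xstar (1/3)\<bar> = NN"
proof -
  have z1: "xhat (-1/3) = 0" using FS_out[OF bnd_one, of "-1/3"] by (simp add: FS_one)
  have z2: "xhat (5/3) = 0" using FS_out[OF bnd_one, of "5/3"] by (simp add: FS_one)
  have a: "xstar (1/3) = 1/3 + sqrt 2 / 2 * MM"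
    using xstar_rec[of "1/3"] z1 xhat_vals by (simp add: e00_def)
  have b: "xstar (5/6) = 1/6 - sqrt 2 / 2 * MM"
    using xstar_rec[of "5/6"] z2 xhat_vals by (simp add: e00_def)
  have "xstar (5/6) - xstar (1/3) = - (1/6 + 2 * (sqrt 2 / 2 * MM))" using a b by simp
  also have "\<dots> = - (1/6 + 2 * ((1 + sqrt 2)/3))" unfolding rMM ..
  also have "\<bar>\<dots>\<bar> = NN" by (simp add: NN_def field_simps)
  finally show ?thesis .
qed

theorem theorem2p2:
  shows "xhat \<in> FS_class
    \<and> (\<forall>x\<in>FS_class. \<forall>t\<in>{0..1}. \<bar>x t\<bar> \<le> (2 + sqrt 2) / 3)
    \<and> (\<forall>t\<in>{0..1}. xhat t \<le> (2 + sqrt 2) / 3)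
    \<and> xhat (1/3) = (2 + sqrt 2) / 3
    \<and> xhat (2/3) = (2 + sqrt 2) / 3
    \<and> xstar \<in> FS_class
    \<and> (\<forall>x\<in>FS_class. \<forall>s\<in>{0..1}. \<forall>t\<in>{0..1}. \<bar>x t - x s\<bar> \<le> (5 + 4 * sqrt 2) / 6)
    \<and> \<bar>xstar (5/6) - xstar (1/3)\<bar> = (5 + 4 * sqrt 2) / 6"
proof (intro conjI)
  show "xhat \<in> FS_class" unfolding FS_class_def
    by (rule CollectI, rule exI[of _ one]) (simp add: FS_one)
  show "\<forall>x\<in>FS_class. \<forall>t\<in>{0..1}. \<bar>x t\<bar> \<le> (2 + sqrt 2) / 3"
  proof (intro ballI)
    fix x t assume "x \<in> FS_class" "t \<in> {0..(1::real)}"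
    then obtain th where th: "\<forall>m k. th m k \<in> {-1, 1}" "x = FS_fun th" by (auto simp: FS_class_def)
    have "\<bar>x t\<bar> \<le> Uf t" using FS_bound[OF bnd_pm[OF th(1)]] th(2) by simp
    then show "\<bar>x t\<bar> \<le> (2 + sqrt 2) / 3" using Uf_le_MM[of t] by (simp add: MM_def)
  qed
  show "\<forall>t\<in>{0..1}. xhat t \<le> (2 + sqrt 2) / 3"
  proof
    fix t :: real
    have "\<bar>xhat t\<bar> \<le> Uf t" using FS_bound[OF bnd_one, of t] by (simp add: FS_one)
    then show "xhat t \<le> (2 + sqrt 2) / 3" using Uf_le_MM[of t] by (simp add: MM_def)
  qed
  show "xhat (1/3) = (2 + sqrt 2) / 3" using xhat_vals by (simp add: MM_def)
  show "xhat (2/3) = (2 + sqrt 2) / 3" using xhat_vals by (simp add: MM_def)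
  show "xstar \<in> FS_class" unfolding FS_class_def xstar_FS
    using ths_pm by blast
  show "\<forall>x\<in>FS_class. \<forall>s\<in>{0..1}. \<forall>t\<in>{0..1}. \<bar>x t - x s\<bar> \<le> (5 + 4 * sqrt 2) / 6"
  proof (intro ballI)
    fix x s t assume "x \<in> FS_class" "s \<in> {0..(1::real)}" "t \<in> {0..(1::real)}"
    then obtain th where th: "\<forall>m k. th m k \<in> {-1, 1}" "x = FS_fun th" by (auto simp: FS_class_def)
    show "\<bar>x t - x s\<bar> \<le> (5 + 4 * sqrt 2) / 6"
      using FS_diff[OF bnd_pm[OF th(1)], of t s] th(2) \<open>s \<in> _\<close> \<open>t \<in> _\<close> by (simp add: NN_def)
  qed
  show "\<bar>xstar (5/6) - xstar (1/3)\<bar> = (5 + 4 * sqrt 2) / 6" using xstar_diff by (simp add: NN_def)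
qed

end
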